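(* Let $T$ be an $\mathbb{N}$-tableau and let $\widehat{T}$ be its image under the toggle map defined in the context. Then the image of the transpose $T^t$ under the toggle map is $\widehat{T}^t$.
   Context: Partitions are drawn in English notation with matrix coordinates: the box in row $i$ and column $j$ is $(i,j)$. An $\mathbb{N}$-tableau of shape $\lambda$ is an assignment of a nonnegative integer to each box of $\lambda$; its transpose $T^t$ has shape the conjugate partition $\lambda'$ and entry $t_{ji}$ at $(i,j)$. A corner box of a partition is a box $(i,j)$ such that neither $(i+1,j)$ nor $(i,j+1)$ is a box. The toggle map $T\mapsto\widehat{T}$ is defined recursively: $\widehat{\emptyset}=\emptyset$; if $T'$ is obtained from $T$ by adding a corner box $(i,j)$ (of $\mathrm{sh}(T')$) with entry $x$, then $\widehat{T'}$ is obtained from $\widehat{T}$ as follows. For $k\ge1$ let $\beta_k,\gamma_k,\alpha_k$ be the entries of $\widehat{T}$ at $(i-k,j-k)$, $(i-k+1,j-k)$, $(i-k,j-k+1)$ respectively (taken to be $0$ if the box is not in $\mathrm{sh}(T)$). Then $\widehat{T'}$ agrees with $\widehat{T}$ except that for $1\le k<\min(i,j)$ the entry at $(i-k,j-k)$ becomes $\max(\alpha_{k+1},\gamma_{k+1})+\min(\alpha_k,\gamma_k)-\beta_k$, and the entry at $(i,j)$ is $\max(\alpha_1,\gamma_1)+x$. This is independent of the order in which boxes are added. *)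

theory Defs
  imports Main
begin

text \<open>Partitions are weakly decreasing lists of positive naturals (English notation).
  Boxes are 1-indexed matrix coordinates (row i, column j).\<close>

definition is_partition :: "nat list \<Rightarrow> bool" where
  "is_partition lam \<longleftrightarrow> sorted_wrt (\<ge>) lam \<and> 0 \<notin> set lam"

definition boxes :: "nat list \<Rightarrow> (nat \<times> nat) set" where
  "boxes lam = {(i, j). 1 \<le> i \<and> i \<le> length lam \<and> 1 \<le> j \<and> j \<le> lam ! (i - 1)}"

definition conj_part :: "nat list \<Rightarrow> nat list" where
  "conj_part lam = (if lam = [] then []
     else map (\<lambda>j. length (filter (\<lambda>r. j \<le> r) lam)) [1..<Suc (hd lam)])"

text \<open>Boxes of a partition in reading order (row by row, left to right);
  each box added is a corner box of the shape obtained so far.\<close>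
definition reading_boxes :: "nat list \<Rightarrow> (nat \<times> nat) list" where
  "reading_boxes lam =
     concat (map (\<lambda>i. map (\<lambda>j. (i, j)) [1..<Suc (lam ! (i - 1))]) [1..<Suc (length lam)])"

text \<open>One step of the toggle map: the current shape S with current values f of the
  toggled tableau; add the corner box (i,j) with entry x. Values are computed in int.\<close>
definition toggle_step ::
  "(nat \<Rightarrow> nat \<Rightarrow> nat) \<Rightarrow> (nat \<times> nat) set \<times> (nat \<Rightarrow> nat \<Rightarrow> int) \<Rightarrow> nat \<times> nat
     \<Rightarrow> (nat \<times> nat) set \<times> (nat \<Rightarrow> nat \<Rightarrow> int)" where
  "toggle_step t Sf ij =
    (let S = fst Sf; f = snd Sf; i = fst ij; j = snd ij;
         v = (\<lambda>p q. if (p, q) \<in> S then f p q else 0);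
         \<alpha> = (\<lambda>k. v (i - k) (j - k + 1));
         \<beta> = (\<lambda>k. v (i - k) (j - k));
         \<gamma> = (\<lambda>k. v (i - k + 1) (j - k))
     in (insert (i, j) S,
         (\<lambda>a b. if (a, b) = (i, j) then max (\<alpha> 1) (\<gamma> 1) + int (t i j)
                else if (\<exists>k. 1 \<le> k \<and> k < min i j \<and> a = i - k \<and> b = j - k)
                  then (let k = i - a in max (\<alpha> (k + 1)) (\<gamma> (k + 1)) + min (\<alpha> k) (\<gamma> k) - \<beta> k)
                else f a b)))"

text \<open>The toggle map applied to the N-tableau of shape lam with entries t (entries of t
  outside the shape are ignored); the result is 0 outside the shape.\<close>
definition toggle :: "nat list \<Rightarrow> (nat \<Rightarrow> nat \<Rightarrow> nat) \<Rightarrow> (nat \<Rightarrow> nat \<Rightarrow> int)" where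
  "toggle lam t =
    (\<lambda>a b. if (a, b) \<in> boxes lam
           then snd (foldl (toggle_step t) ({}, (\<lambda>_ _. 0)) (reading_boxes lam)) a b
           else 0)"

end

theory Submission
  imports Defs
begin


definition msk :: "(nat \<times> nat) set \<Rightarrow> (nat \<Rightarrow> nat \<Rightarrow> int) \<Rightarrow> nat \<Rightarrow> nat \<Rightarrow> int" where
  "msk S f p q = (if (p, q) \<in> S then f p q else 0)"

definition ondiag :: "nat \<Rightarrow> nat \<Rightarrow> nat \<Rightarrow> nat \<Rightarrow> bool" where
  "ondiag i j a b \<longleftrightarrow> 1 \<le> a \<and> 1 \<le> b \<and> a \<le> i \<and> int b - int a = int j - int i"

definition newval :: "(nat \<Rightarrow> nat \<Rightarrow> nat) \<Rightarrow> (nat \<times> nat) set \<Rightarrow> (nat \<Rightarrow> nat \<Rightarrow> int) \<Rightarrow> nat \<Rightarrow> nat \<Rightarrow> nat \<Rightarrow> nat \<Rightarrow> int" where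
  "newval t S f i j a b = (if (a, b) = (i, j)
     then max (msk S f (a - 1) b) (msk S f a (b - 1)) + int (t i j)
     else max (msk S f (a - 1) b) (msk S f a (b - 1)) + min (msk S f a (b + 1)) (msk S f (a + 1) b) - msk S f a b)"

definition step2 where
  "step2 t S f i j = (insert (i, j) S, \<lambda>a b. if ondiag i j a b then newval t S f i j a b else f a b)"

lemma step_unf:
  "toggle_step t (S, f) (i, j) = (insert (i, j) S, \<lambda>a b. if (a, b) = (i, j) then max (msk S f (i - 1) (j - 1 + 1)) (msk S f (i - 1 + 1) (j - 1)) + int (t i j)
       else if (\<exists>k. 1 \<le> k \<and> k < min i j \<and> a = i - k \<and> b = j - k)
         then max (msk S f (i - (i - a + 1)) (j - (i - a + 1) + 1)) (msk S f (i - (i - a + 1) + 1) (j - (i - a + 1)))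
            + min (msk S f (i - (i - a)) (j - (i - a) + 1)) (msk S f (i - (i - a) + 1) (j - (i - a))) - msk S f (i - (i - a)) (j - (i - a))
         else f a b)"
  unfolding toggle_step_def Let_def msk_def fst_conv snd_conv by (rule refl)

lemma diag_iff:
  assumes "1 \<le> i" "1 \<le> j"
  shows "(\<exists>k. 1 \<le> k \<and> k < min i j \<and> a = i - k \<and> b = j - k) \<longleftrightarrow> ondiag i j a b \<and> (a, b) \<noteq> (i, j)"
proof
  assume "\<exists>k. 1 \<le> k \<and> k < min i j \<and> a = i - k \<and> b = j - k"
  then obtain k where "1 \<le> k" "k < min i j" "a = i - k" "b = j - k" by blast
  then show "ondiag i j a b \<and> (a, b) \<noteq> (i, j)" unfolding ondiag_def by auto
next
  assume h: "ondiag i j a b \<and> (a, b) \<noteq> (i, j)"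
  then have "1 \<le> a" "1 \<le> b" "a \<le> i" "int b - int a = int j - int i" unfolding ondiag_def by auto
  with h have "1 \<le> i - a \<and> i - a < min i j \<and> a = i - (i - a) \<and> b = j - (i - a)" by auto
  then show "\<exists>k. 1 \<le> k \<and> k < min i j \<and> a = i - k \<and> b = j - k" by blast
qed

lemma step_eq:
  assumes "1 \<le> i" "1 \<le> j"
  shows "toggle_step t (S, f) (i, j) = step2 t S f i j"
  unfolding step_unf step2_def diag_iff[OF assms]
proof (intro arg_cong[where f="Pair _"] ext)
  fix a b
  show "(if (a, b) = (i, j) then max (msk S f (i - 1) (j - 1 + 1)) (msk S f (i - 1 + 1) (j - 1)) + int (t i j)
       else if ondiag i j a b \<and> (a, b) \<noteq> (i, j)
         then max (msk S f (i - (i - a + 1)) (j - (i - a + 1) + 1)) (msk S f (i - (i - a + 1) + 1) (j - (i - a + 1)))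
            + min (msk S f (i - (i - a)) (j - (i - a) + 1)) (msk S f (i - (i - a) + 1) (j - (i - a))) - msk S f (i - (i - a)) (j - (i - a))
         else f a b) = (if ondiag i j a b then newval t S f i j a b else f a b)"
  proof (cases "(a, b) = (i, j)")
    case True
    then show ?thesis using assms by (simp add: newval_def ondiag_def)
  next
    case False
    show ?thesis
    proof (cases "ondiag i j a b")
      case True
      then have "1 \<le> a" "1 \<le> b" "a \<le> i" "int b - int a = int j - int i" unfolding ondiag_def by auto
      moreover have "a < i" using False \<open>a \<le> i\<close> \<open>int b - int a = int j - int i\<close> by (cases "a = i") auto
      ultimately have e: "i - (i - a + 1) = a - 1" "j - (i - a + 1) + 1 = b" "i - (i - a + 1) + 1 = a"
        "j - (i - a + 1) = b - 1" "i - (i - a) = a" "j - (i - a) = b" by linarith+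
      have s: "Suc (a - Suc 0) = a" "Suc (b - Suc 0) = b" using \<open>1 \<le> a\<close> \<open>1 \<le> b\<close> by auto
      show ?thesis using True False unfolding e by (auto simp add: newval_def s)
    next
      case False
      then show ?thesis using \<open>(a, b) \<noteq> (i, j)\<close> by auto
    qed
  qed
qed



lemma msk_step2:
  assumes "int q - int p \<noteq> int j - int i"
  shows "msk (fst (step2 t S f i j)) (snd (step2 t S f i j)) p q = msk S f p q"
  using assms unfolding step2_def msk_def ondiag_def by auto

lemma newval_cong:
  assumes "ondiag i j a b"
    and h: "\<And>p q. int q - int p \<noteq> c \<Longrightarrow> msk S1 f1 p q = msk S f p q"
    and "\<bar>c - (int j - int i)\<bar> \<ge> 2"
  shows "newval t S1 f1 i j a b = newval t S f i j a b"
proof -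
  from assms(1) have a: "1 \<le> a" "1 \<le> b" "int b - int a = int j - int i" unfolding ondiag_def by auto
  have "msk S1 f1 (a - 1) b = msk S f (a - 1) b" by (rule h) (use a assms(3) in auto)
  moreover have "msk S1 f1 a (b - 1) = msk S f a (b - 1)" by (rule h) (use a assms(3) in auto)
  moreover have "msk S1 f1 a (b + 1) = msk S f a (b + 1)" by (rule h) (use a assms(3) in auto)
  moreover have "msk S1 f1 (a + 1) b = msk S f (a + 1) b" by (rule h) (use a assms(3) in auto)
  moreover have "msk S1 f1 a b = msk S f a b" by (rule h) (use a assms(3) in auto)
  ultimately show ?thesis unfolding newval_def by (simp only:)
qed

lemma step2_commute:
  assumes "1 \<le> i" "1 \<le> j" "1 \<le> i'" "1 \<le> j'" "\<not> (i \<le> i' \<and> j \<le> j')" "\<not> (i' \<le> i \<and> j' \<le> j)"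
  shows "step2 t (fst (step2 t S f i j)) (snd (step2 t S f i j)) i' j'
       = step2 t (fst (step2 t S f i' j')) (snd (step2 t S f i' j')) i j"
proof -
  have cd: "\<bar>(int j - int i) - (int j' - int i')\<bar> \<ge> 2" using assms by linarith
  have c: "\<not> (ondiag i j a b \<and> ondiag i' j' a b)" for a b
    using cd unfolding ondiag_def by auto
  have n1: "newval t (fst (step2 t S f i j)) (snd (step2 t S f i j)) i' j' a b = newval t S f i' j' a b"
    if "ondiag i' j' a b" for a b
    by (rule newval_cong[OF that, of "int j - int i"]) (use msk_step2 cd in auto)
  have n2: "newval t (fst (step2 t S f i' j')) (snd (step2 t S f i' j')) i j a b = newval t S f i j a b"
    if "ondiag i j a b" for a b
    by (rule newval_cong[OF that, of "int j' - int i'"]) (use msk_step2 cd in auto)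
  have e1: "step2 t (fst (step2 t S f i j)) (snd (step2 t S f i j)) i' j' =
     (insert (i', j') (insert (i, j) S), \<lambda>a b. if ondiag i' j' a b then newval t S f i' j' a b
        else if ondiag i j a b then newval t S f i j a b else f a b)"
    unfolding step2_def[of t "fst (step2 t S f i j)"] using n1 by (simp add: step2_def fun_eq_iff)
  have e2: "step2 t (fst (step2 t S f i' j')) (snd (step2 t S f i' j')) i j =
     (insert (i, j) (insert (i', j') S), \<lambda>a b. if ondiag i j a b then newval t S f i j a b
        else if ondiag i' j' a b then newval t S f i' j' a b else f a b)"
    unfolding step2_def[of t "fst (step2 t S f i' j')"] using n2 by (simp add: step2_def fun_eq_iff)
  show ?thesis unfolding e1 e2 using c by (auto simp: fun_eq_iff insert_commute)
qed

lemma ts_commute: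
  assumes "1 \<le> i" "1 \<le> j" "1 \<le> i'" "1 \<le> j'" "\<not> (i \<le> i' \<and> j \<le> j')" "\<not> (i' \<le> i \<and> j' \<le> j)"
  shows "toggle_step t (toggle_step t s (i, j)) (i', j') = toggle_step t (toggle_step t s (i', j')) (i, j)"
proof -
  obtain S f where s: "s = (S, f)" by (cases s)
  have "toggle_step t (toggle_step t s (i, j)) (i', j') = step2 t (fst (step2 t S f i j)) (snd (step2 t S f i j)) i' j'"
    unfolding s step_eq[OF assms(1,2)] by (metis prod.collapse step_eq assms(3,4))
  moreover have "toggle_step t (toggle_step t s (i', j')) (i, j) = step2 t (fst (step2 t S f i' j')) (snd (step2 t S f i' j')) i j"
    unfolding s step_eq[OF assms(3,4)] by (metis prod.collapse step_eq assms(1,2))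
  ultimately show ?thesis using step2_commute[OF assms] by simp
qed

lemma ondiag_swap: "ondiag j i a b = ondiag i j b a"
  unfolding ondiag_def by auto

lemma msk_swap: "msk (prod.swap ` S) (\<lambda>a b. f b a) p q = msk S f q p"
  unfolding msk_def by (auto simp: image_iff)

lemma newval_swap: "newval (\<lambda>i j. t j i) (prod.swap ` S) (\<lambda>a b. f b a) j i a b = newval t S f i j b a"
  unfolding newval_def msk_swap by (auto simp: max.commute min.commute)

lemma step2_swap:
  "step2 (\<lambda>i j. t j i) (prod.swap ` S) (\<lambda>a b. f b a) j i
     = (prod.swap ` fst (step2 t S f i j), \<lambda>a b. snd (step2 t S f i j) b a)"
  unfolding step2_def fst_conv snd_conv
proof (intro arg_cong2[where f=Pair] ext)
  show "insert (j, i) (prod.swap ` S) = prod.swap ` insert (i, j) S" by simp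
next
  fix a b
  show "(if ondiag j i a b then newval (\<lambda>i j. t j i) (prod.swap ` S) (\<lambda>a b. f b a) j i a b else f b a) =
        (if ondiag i j b a then newval t S f i j b a else f b a)"
    using newval_swap[of t S f j i a b] ondiag_swap[of j i a b] by simp
qed

lemma fold_swap:
  "\<forall>x\<in>set xs. 1 \<le> fst x \<and> 1 \<le> snd x \<Longrightarrow>
   foldl (toggle_step (\<lambda>i j. t j i)) (prod.swap ` S, \<lambda>a b. f b a) (map prod.swap xs)
   = (prod.swap ` fst (foldl (toggle_step t) (S, f) xs), \<lambda>a b. snd (foldl (toggle_step t) (S, f) xs) b a)"
proof (induction xs arbitrary: S f)
  case Nil
  then show ?case by simp
next
  case (Cons x xs)
  obtain i j where x: "x = (i, j)" by (cases x)
  have ij: "1 \<le> i" "1 \<le> j" using Cons.prems x by auto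
  have "foldl (toggle_step (\<lambda>i j. t j i)) (prod.swap ` S, \<lambda>a b. f b a) (map prod.swap (x # xs))
     = foldl (toggle_step (\<lambda>i j. t j i)) (prod.swap ` fst (step2 t S f i j), \<lambda>a b. snd (step2 t S f i j) b a) (map prod.swap xs)"
    using x ij by (simp add: step_eq step2_swap)
  also have "\<dots> = (prod.swap ` fst (foldl (toggle_step t) (fst (step2 t S f i j), snd (step2 t S f i j)) xs),
        \<lambda>a b. snd (foldl (toggle_step t) (fst (step2 t S f i j), snd (step2 t S f i j)) xs) b a)"
    by (rule Cons.IH) (use Cons.prems in auto)
  also have "\<dots> = (prod.swap ` fst (foldl (toggle_step t) (S, f) (x # xs)), \<lambda>a b. snd (foldl (toggle_step t) (S, f) (x # xs)) b a)"
    using x ij by (simp add: step_eq)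
  finally show ?case .
qed



definition dc :: "(nat \<times> nat) set \<Rightarrow> bool" where
  "dc A \<longleftrightarrow> (\<forall>p q. (p, q) \<in> A \<longrightarrow> 1 \<le> p \<and> 1 \<le> q \<and>
      (\<forall>p' q'. 1 \<le> p' \<and> p' \<le> p \<and> 1 \<le> q' \<and> q' \<le> q \<longrightarrow> (p', q') \<in> A))"

definition valid :: "(nat \<times> nat) list \<Rightarrow> bool" where
  "valid xs \<longleftrightarrow> distinct xs \<and> (\<forall>n. dc (set (take n xs)))"

lemma dc_down: "dc B \<Longrightarrow> (p, q) \<in> B \<Longrightarrow> 1 \<le> p' \<Longrightarrow> p' \<le> p \<Longrightarrow> 1 \<le> q' \<Longrightarrow> q' \<le> q \<Longrightarrow> (p', q') \<in> B"
  unfolding dc_def by blast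

lemma incomp:
  assumes "dc (insert z A)" "dc (insert w A)" "z \<notin> A" "w \<notin> A" "z \<noteq> w"
  shows "\<not> (fst w \<le> fst z \<and> snd w \<le> snd z)"
proof
  assume le: "fst w \<le> fst z \<and> snd w \<le> snd z"
  obtain a b where z: "z = (a, b)" by (cases z)
  obtain c d where w: "w = (c, d)" by (cases w)
  have "1 \<le> c" "1 \<le> d" using assms(2) w unfolding dc_def by auto
  moreover have "(a, b) \<in> insert z A" using z by simp
  ultimately have "(c, d) \<in> insert z A" using dc_down[OF assms(1), of a b c d] le z w by simp
  then show False using assms(3,4,5) z w by auto
qed

lemma dc_coords: "dc A \<Longrightarrow> (p, q) \<in> A \<Longrightarrow> 1 \<le> p \<and> 1 \<le> q"
  unfolding dc_def by blast

lemma bubble: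
  assumes "\<forall>n. dc (A \<union> set (take n bs)) \<and> dc (insert z (A \<union> set (take n bs)))"
    "z \<notin> A" "z \<notin> set bs" "distinct bs" "A \<inter> set bs = {}"
  shows "foldl (toggle_step t) s (z # bs) = foldl (toggle_step t) s (bs @ [z])"
  using assms
proof (induction bs arbitrary: A s)
  case Nil
  then show ?case by simp
next
  case (Cons b bs)
  have dz: "dc (insert z A)" using Cons.prems(1)[rule_format, of 0] by simp
  have db: "dc (insert b A)" using Cons.prems(1)[rule_format, of 1] by simp
  have bA: "b \<notin> A" using Cons.prems(5) by auto
  have zb: "z \<noteq> b" using Cons.prems(3) by auto
  have i1: "\<not> (fst b \<le> fst z \<and> snd b \<le> snd z)" by (rule incomp[OF dz db Cons.prems(2) bA zb])
  have i2: "\<not> (fst z \<le> fst b \<and> snd z \<le> snd b)" by (rule incomp[OF db dz bA Cons.prems(2) zb[symmetric]])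
  obtain i j where z: "z = (i, j)" by (cases z)
  obtain i' j' where b: "b = (i', j')" by (cases b)
  have c1: "1 \<le> i" "1 \<le> j" using dc_coords[OF dz, of i j] z by auto
  have c2: "1 \<le> i'" "1 \<le> j'" using dc_coords[OF db, of i' j'] b by auto
  have com: "toggle_step t (toggle_step t s z) b = toggle_step t (toggle_step t s b) z"
    unfolding z b by (rule ts_commute) (use c1 c2 i1 i2 z b in auto)
  have IH: "foldl (toggle_step t) (toggle_step t s b) (z # bs) = foldl (toggle_step t) (toggle_step t s b) (bs @ [z])"
  proof (rule Cons.IH)
    show "\<forall>n. dc (insert b A \<union> set (take n bs)) \<and> dc (insert z (insert b A \<union> set (take n bs)))"
    proof
      fix n
      show "dc (insert b A \<union> set (take n bs)) \<and> dc (insert z (insert b A \<union> set (take n bs)))"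
        using Cons.prems(1)[rule_format, of "Suc n"] by simp
    qed
    show "z \<notin> insert b A" using zb Cons.prems(2) by simp
    show "z \<notin> set bs" using Cons.prems(3) by simp
    show "distinct bs" using Cons.prems(4) by simp
    show "insert b A \<inter> set bs = {}" using Cons.prems(4,5) by auto
  qed
  have "foldl (toggle_step t) s (z # b # bs) = foldl (toggle_step t) (toggle_step t (toggle_step t s z) b) bs" by simp
  also have "\<dots> = foldl (toggle_step t) (toggle_step t s b) (z # bs)" using com by simp
  also have "\<dots> = foldl (toggle_step t) (toggle_step t s b) (bs @ [z])" by (rule IH)
  finally show ?case by simp
qed

lemma dc_remove:
  assumes "dc B" "B \<subseteq> insert z Y" "dc Y" "z \<notin> Y"
  shows "dc (B - {z})"
  unfolding dc_def
proof (intro allI impI conjI)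
  fix p q assume pq: "(p, q) \<in> B - {z}"
  then show "1 \<le> p" "1 \<le> q" using assms(1) unfolding dc_def by auto
  fix p' q' assume le: "1 \<le> p' \<and> p' \<le> p \<and> 1 \<le> q' \<and> q' \<le> q"
  have "(p', q') \<in> B" using dc_down[OF assms(1), of p q p' q'] pq le by blast
  moreover have "(p', q') \<noteq> z"
  proof
    assume e: "(p', q') = z"
    have "(p, q) \<in> Y" using pq assms(2) by auto
    then have "(p', q') \<in> Y" using dc_down[OF assms(3), of p q p' q'] le by blast
    then show False using e assms(4) by simp
  qed
  ultimately show "(p', q') \<in> B - {z}" by simp
qed

lemma valid_fold:
  assumes "valid xs" "valid ys" "set xs = set ys"
  shows "foldl (toggle_step t) s xs = foldl (toggle_step t) s ys"
  using assms
proof (induction ys arbitrary: xs rule: rev_induct)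
  case Nil
  then show ?case by simp
next
  case (snoc z ys)
  have dys: "distinct (ys @ [z])" using snoc.prems(2) unfolding valid_def by simp
  then have zys: "z \<notin> set ys" and dys': "distinct ys" by auto
  have "dc (set (take (length ys) (ys @ [z])))" using snoc.prems(2) unfolding valid_def by blast
  then have dcys: "dc (set ys)" by simp
  have vys: "valid ys" unfolding valid_def
  proof
    show "distinct ys" by (rule dys')
    show "\<forall>n. dc (set (take n ys))"
    proof
      fix n
      show "dc (set (take n ys))"
      proof (cases "n \<le> length ys")
        case True
        then have "take n ys = take n (ys @ [z])" by simp
        then show ?thesis using snoc.prems(2) unfolding valid_def by metis
      next
        case False
        then show ?thesis using dcys by simp
      qed
    qed
  qed
  have "z \<in> set xs" using snoc.prems(3) by simp
  then obtain as bs where xs: "xs = as @ z # bs" by (meson split_list)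
  have dxs: "distinct xs" using snoc.prems(1) unfolding valid_def by simp
  have zas: "z \<notin> set as" and zbs: "z \<notin> set bs" and das: "distinct as" and dbs: "distinct bs"
    and disj: "set as \<inter> set bs = {}" using dxs xs by auto
  have setxs: "set xs = insert z (set ys)" using snoc.prems(3) by simp
  define xs' where "xs' = as @ bs"
  have setxs': "set xs' = set ys" using setxs xs zas zbs zys unfolding xs'_def by auto
  have tk: "set (take n xs') = set (take (if n \<le> length as then n else Suc n) xs) - {z}" for n
  proof (cases "n \<le> length as")
    case True
    then have "set (take n xs) = set (take n as)" unfolding xs by simp
    moreover have "z \<notin> set (take n as)" using zas by (meson in_set_takeD)
    ultimately show ?thesis using True unfolding xs'_def by simp
  next
    case False
    then have "take (Suc n) xs = as @ z # take (n - length as) bs" unfolding xs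
      by (simp add: Suc_diff_le)
    moreover have "take n xs' = as @ take (n - length as) bs" using False unfolding xs'_def by simp
    moreover have "z \<notin> set (take (n - length as) bs)" using zbs by (meson in_set_takeD)
    ultimately show ?thesis using False zas by auto
  qed
  have dcxs': "dc (set (take n xs'))" for n
    unfolding tk
  proof (rule dc_remove)
    show "dc (set (take (if n \<le> length as then n else Suc n) xs))" using snoc.prems(1) unfolding valid_def by blast
    show "set (take (if n \<le> length as then n else Suc n) xs) \<subseteq> insert z (set ys)"
      using set_take_subset[of _ xs] setxs by blast
  qed (use dcys zys in auto)
  have vxs': "valid xs'" unfolding valid_def using dxs xs dcxs' unfolding xs'_def by auto
  have IH: "foldl (toggle_step t) s xs' = foldl (toggle_step t) s ys"
    by (rule snoc.IH[OF vxs' vys setxs'])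
  have bub: "foldl (toggle_step t) (foldl (toggle_step t) s as) (z # bs) = foldl (toggle_step t) (foldl (toggle_step t) s as) (bs @ [z])"
  proof (rule bubble)
    show "\<forall>n. dc (set as \<union> set (take n bs)) \<and> dc (insert z (set as \<union> set (take n bs)))"
    proof
      fix n
      have "take (length as + n) xs' = as @ take n bs" unfolding xs'_def by simp
      then have 1: "dc (set as \<union> set (take n bs))" using dcxs'[of "length as + n"] by simp
      have "take (length as + Suc n) xs = as @ z # take n bs" unfolding xs by simp
      moreover have "dc (set (take (length as + Suc n) xs))" using snoc.prems(1) unfolding valid_def by blast
      ultimately have 2: "dc (insert z (set as \<union> set (take n bs)))" by simp
      show "dc (set as \<union> set (take n bs)) \<and> dc (insert z (set as \<union> set (take n bs)))" using 1 2 by simp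
    qed
  qed (use zas zbs dbs disj in auto)
  have "foldl (toggle_step t) s xs = foldl (toggle_step t) (foldl (toggle_step t) s as) (z # bs)"
    unfolding xs by simp
  also have "\<dots> = foldl (toggle_step t) s (xs' @ [z])" unfolding bub xs'_def by simp
  also have "\<dots> = toggle_step t (foldl (toggle_step t) s ys) z" using IH by simp
  finally show ?case by simp
qed



declare upt_Suc[simp del]

lemma filter_len_mono: "(\<And>x. P x \<Longrightarrow> Q x) \<Longrightarrow> length (filter P xs) \<le> length (filter Q xs)"
  by (induction xs) auto

lemma filter_none: "\<forall>y\<in>set xs. y \<le> (x::nat) \<Longrightarrow> \<not> i \<le> x \<Longrightarrow> filter (\<lambda>r. i \<le> r) xs = []"
  by (induction xs) auto

lemma cnt:
  fixes lam :: "nat list"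
  assumes "sorted_wrt (\<ge>) lam" "1 \<le> j"
  shows "j \<le> length (filter (\<lambda>r. i \<le> r) lam) \<longleftrightarrow> j \<le> length lam \<and> i \<le> lam ! (j - 1)"
  using assms
proof (induction lam arbitrary: j)
  case Nil
  then show ?case by simp
next
  case (Cons x xs)
  show ?case
  proof (cases "i \<le> x")
    case True
    show ?thesis
    proof (cases "j = 1")
      case True
      then show ?thesis using \<open>i \<le> x\<close> by simp
    next
      case False
      then have "j - 1 \<ge> 1" using Cons.prems by simp
      from Cons.IH[OF _ this] Cons.prems(1) have "j - 1 \<le> length (filter (\<lambda>r. i \<le> r) xs) \<longleftrightarrow> j - 1 \<le> length xs \<and> i \<le> xs ! (j - 1 - 1)"
        by simp
      moreover have "(x # xs) ! (j - 1) = xs ! (j - 1 - 1)"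
      proof -
        have "j - 1 \<noteq> 0" using False Cons.prems(2) by simp
        then show ?thesis by (simp add: nth_Cons')
      qed
      ultimately show ?thesis using True False Cons.prems(2) by auto
    qed
  next
    case False
    have "\<forall>y\<in>set xs. y \<le> x" using Cons.prems(1) by simp
    then have "filter (\<lambda>r. i \<le> r) xs = []" using False by (rule filter_none)
    moreover have "(x # xs) ! (j - 1) \<le> x" if jl: "j \<le> length (x # xs)"
    proof (cases "j - 1")
      case 0 then show ?thesis by simp
    next
      case (Suc k)
      then have "k < length xs" using jl Cons.prems(2) by simp
      then have "xs ! k \<in> set xs" by simp
      then show ?thesis using Cons.prems(1) Suc by simp
    qed
    ultimately show ?thesis using False Cons.prems(2) by auto
  qed
qed

lemma boxes_conj:
  assumes "is_partition lam"
  shows "(i, j) \<in> boxes (conj_part lam) \<longleftrightarrow> (j, i) \<in> boxes lam"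
proof (cases "lam = []")
  case True
  then show ?thesis by (auto simp: boxes_def conj_part_def)
next
  case False
  have s: "sorted_wrt (\<ge>) lam" using assms unfolding is_partition_def by simp
  have hd: "hd lam = lam ! 0" using False by (simp add: hd_conv_nth)
  have lehd: "lam ! k \<le> hd lam" if "k < length lam" for k
    using s that hd unfolding sorted_wrt_iff_nth_less by (cases k) auto
  have nu: "[1..<Suc (hd lam)] ! (i - 1) = i" if "1 \<le> i" "i \<le> hd lam" for i
    using that by (subst nth_upt) auto
  show ?thesis
  proof
    assume h: "(i, j) \<in> boxes (conj_part lam)"
    then have i: "1 \<le> i" "i \<le> hd lam" and j: "1 \<le> j" "j \<le> conj_part lam ! (i - 1)"
      using False unfolding boxes_def conj_part_def by auto
    have "conj_part lam ! (i - 1) = length (filter (\<lambda>r. i \<le> r) lam)"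
      using False i nu[OF i] unfolding conj_part_def by simp
    then show "(j, i) \<in> boxes lam" using cnt[OF s j(1), of i] j i unfolding boxes_def by auto
  next
    assume h: "(j, i) \<in> boxes lam"
    then have j: "1 \<le> j" "j \<le> length lam" and i: "1 \<le> i" "i \<le> lam ! (j - 1)"
      unfolding boxes_def by auto
    have "j - 1 < length lam" using j by linarith
    then have ih: "i \<le> hd lam" using lehd[of "j - 1"] i by linarith
    have "conj_part lam ! (i - 1) = length (filter (\<lambda>r. i \<le> r) lam)"
      using False i ih nu[OF i(1) ih] unfolding conj_part_def by simp
    then show "(i, j) \<in> boxes (conj_part lam)" using cnt[OF s j(1), of i] j i ih False
      unfolding boxes_def conj_part_def by auto
  qed
qed

lemma conj_partition:
  assumes "is_partition lam"
  shows "is_partition (conj_part lam)"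
proof (cases "lam = []")
  case True
  then show ?thesis by (simp add: is_partition_def conj_part_def)
next
  case False
  have "sorted_wrt (\<ge>) (map (\<lambda>j. length (filter (\<lambda>r. j \<le> r) lam)) [1..<Suc (hd lam)])"
    unfolding sorted_wrt_map
    by (rule sorted_wrt_mono_rel[OF _ sorted_wrt_upt]) (auto intro: filter_len_mono)
  moreover have "0 \<notin> set (map (\<lambda>j. length (filter (\<lambda>r. j \<le> r) lam)) [1..<Suc (hd lam)])"
  proof
    assume "0 \<in> set (map (\<lambda>j. length (filter (\<lambda>r. j \<le> r) lam)) [1..<Suc (hd lam)])"
    then obtain k where "k \<in> set [1..<Suc (hd lam)]" "0 = length (filter (\<lambda>r. k \<le> r) lam)"
      unfolding set_map image_iff by blast
    then have "k \<le> hd lam" "filter (\<lambda>r. k \<le> r) lam = []" by auto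
    moreover have "hd lam \<in> set lam" using False by simp
    ultimately show False by (auto simp: filter_empty_conv)
  qed
  ultimately show ?thesis using False unfolding is_partition_def conj_part_def by simp
qed

lemma UN_Pair: "((a, b) \<in> (\<Union>i\<in>I. Pair i ` J i)) = (a \<in> I \<and> b \<in> J a)"
  by auto

lemma set_reading: "set (reading_boxes lam) = boxes lam"
proof -
  have "set (reading_boxes lam) = (\<Union>i\<in>{1..<Suc (length lam)}. Pair i ` {1..<Suc (lam ! (i - 1))})"
    unfolding reading_boxes_def by (simp del: upt_Suc)
  also have "\<dots> = boxes lam"
  proof (rule set_eqI)
    fix x
    show "x \<in> (\<Union>i\<in>{1..<Suc (length lam)}. Pair i ` {1..<Suc (lam ! (i - 1))}) \<longleftrightarrow> x \<in> boxes lam"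
    proof (cases x)
      case (Pair a b)
      show ?thesis unfolding Pair UN_Pair boxes_def by auto
    qed
  qed
  finally show ?thesis .
qed

lemma reading_snoc:
  "reading_boxes (lam @ [r]) = reading_boxes lam @ map (\<lambda>j. (Suc (length lam), j)) [1..<Suc r]"
proof -
  have e: "map (\<lambda>i. map (\<lambda>j. (i, j)) [1..<Suc ((lam @ [r]) ! (i - 1))]) [1..<Suc (length lam)]
      = map (\<lambda>i. map (\<lambda>j. (i, j)) [1..<Suc (lam ! (i - 1))]) [1..<Suc (length lam)]"
  proof (rule map_cong[OF refl])
    fix i assume "i \<in> set [1..<Suc (length lam)]"
    then have "i - 1 < length lam" by auto
    then show "map (\<lambda>j. (i, j)) [1..<Suc ((lam @ [r]) ! (i - 1))] = map (\<lambda>j. (i, j)) [1..<Suc (lam ! (i - 1))]"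
      by (simp add: nth_append del: upt_Suc)
  qed
  have u: "[1..<Suc (Suc (length lam))] = [1..<Suc (length lam)] @ [Suc (length lam)]"
    by (rule upt_Suc_append) simp
  have l: "(lam @ [r]) ! (Suc (length lam) - 1) = r" by simp
  show ?thesis unfolding reading_boxes_def length_append_singleton u map_append concat_append e
    using l by (simp del: upt_Suc)
qed

lemma valid_append:
  assumes "valid xs" "distinct ys" "set xs \<inter> set ys = {}" "\<forall>n. dc (set xs \<union> set (take n ys))"
  shows "valid (xs @ ys)"
  unfolding valid_def
proof (intro conjI allI)
  show "distinct (xs @ ys)" using assms(1,2,3) unfolding valid_def by simp
  fix n
  show "dc (set (take n (xs @ ys)))"
  proof (cases "n \<le> length xs")
    case True
    then show ?thesis using assms(1) unfolding valid_def by simp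
  next
    case False
    then show ?thesis using assms(4) by simp
  qed
qed

lemma dc_boxes_row:
  assumes "is_partition (lam @ [r])" "k \<le> r"
  shows "dc (boxes lam \<union> {(Suc (length lam), j) | j. 1 \<le> j \<and> j \<le> k})"
proof -
  have s: "sorted_wrt (\<ge>) (lam @ [r])" using assms unfolding is_partition_def by simp
  then have sl: "sorted_wrt (\<ge>) lam" and sr: "\<forall>x\<in>set lam. r \<le> x"
    by (simp_all add: sorted_wrt_append)
  have s1: "\<And>a b. a < b \<Longrightarrow> b < length lam \<Longrightarrow> lam ! b \<le> lam ! a"
    using sl unfolding sorted_wrt_iff_nth_less by auto
  have s2: "\<And>a. a < length lam \<Longrightarrow> r \<le> lam ! a"
    using sr nth_mem by blast
  have mono: "lam ! b \<le> lam ! a" if "a \<le> b" "b < length lam" for a b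
    using s1[of a b] that by (cases "a = b") auto
  show ?thesis
    unfolding dc_def boxes_def
  proof (intro allI impI conjI)
    fix p q assume pq: "(p, q) \<in> {(i, j). 1 \<le> i \<and> i \<le> length lam \<and> 1 \<le> j \<and> j \<le> lam ! (i - 1)} \<union>
             {(Suc (length lam), j) |j. 1 \<le> j \<and> j \<le> k}"
    then show "1 \<le> p" "1 \<le> q" by auto
    fix p' q' assume le: "1 \<le> p' \<and> p' \<le> p \<and> 1 \<le> q' \<and> q' \<le> q"
    show "(p', q') \<in> {(i, j). 1 \<le> i \<and> i \<le> length lam \<and> 1 \<le> j \<and> j \<le> lam ! (i - 1)} \<union>
             {(Suc (length lam), j) |j. 1 \<le> j \<and> j \<le> k}"
    proof (cases "p' = Suc (length lam)")
      case True
      then have "p = Suc (length lam)" using pq le by auto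
      then show ?thesis using pq le True by auto
    next
      case False
      then have p'l: "p' \<le> length lam" using pq le by auto
      have "q \<le> lam ! (p' - 1)"
      proof (cases "p = Suc (length lam)")
        case True
        then have "q \<le> k" using pq by auto
        moreover have "p' - 1 < length lam" using p'l le by auto
        ultimately show ?thesis using s2[of "p' - 1"] assms(2) by linarith
      next
        case False
        then have "p \<le> length lam" "q \<le> lam ! (p - 1)" using pq by auto
        moreover have "lam ! (p - 1) \<le> lam ! (p' - 1)" by (rule mono) (use le \<open>p \<le> length lam\<close> in auto)
        ultimately show ?thesis by linarith
      qed
      then show ?thesis using le p'l by auto
    qed
  qed
qed

lemma valid_reading: "is_partition lam \<Longrightarrow> valid (reading_boxes lam)"
proof (induction lam rule: rev_induct)
  case Nil
  then show ?case by (simp add: reading_boxes_def valid_def dc_def)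
next
  case (snoc r lam)
  have pl: "is_partition lam" using snoc.prems unfolding is_partition_def sorted_wrt_append by simp
  let ?ys = "map (\<lambda>j. (Suc (length lam), j)) [1..<Suc r]"
  show ?case unfolding reading_snoc
  proof (rule valid_append)
    show "valid (reading_boxes lam)" by (rule snoc.IH[OF pl])
    show "distinct ?ys" by (simp add: distinct_map inj_on_def)
    show "set (reading_boxes lam) \<inter> set ?ys = {}" unfolding set_reading boxes_def by auto
    show "\<forall>n. dc (set (reading_boxes lam) \<union> set (take n ?ys))"
    proof
      fix n
      have tk: "take n [1..<Suc r] = [1..<Suc (min n r)]"
      proof (cases "n \<le> r")
        case True
        then show ?thesis using take_upt[of 1 n "Suc r"] by (simp del: upt_Suc)
      next
        case False
        then show ?thesis by (simp del: upt_Suc add: min_def)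
      qed
      have "set (take n ?ys) = Pair (Suc (length lam)) ` {1..<Suc (min n r)}"
        unfolding take_map tk by (simp del: upt_Suc)
      also have "\<dots> = {(Suc (length lam), j) | j. 1 \<le> j \<and> j \<le> min n r}" by auto
      finally have "set (take n ?ys) = {(Suc (length lam), j) | j. 1 \<le> j \<and> j \<le> min n r}" .
      then show "dc (set (reading_boxes lam) \<union> set (take n ?ys))"
        unfolding set_reading using dc_boxes_row[OF snoc.prems, of "min n r"] by simp
    qed
  qed
qed

lemma dc_swap:
  assumes "dc A" shows "dc (prod.swap ` A)"
  unfolding dc_def
proof (intro allI impI conjI)
  fix p q assume "(p, q) \<in> prod.swap ` A"
  then have qp: "(q, p) \<in> A" by force
  then show "1 \<le> p" "1 \<le> q" using dc_coords[OF assms qp] by auto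
  fix p' q' assume le: "1 \<le> p' \<and> p' \<le> p \<and> 1 \<le> q' \<and> q' \<le> q"
  then have "(q', p') \<in> A" using dc_down[OF assms qp, of q' p'] by simp
  then show "(p', q') \<in> prod.swap ` A" by force
qed

lemma valid_swap: "valid xs \<Longrightarrow> valid (map prod.swap xs)"
  unfolding valid_def by (auto simp: distinct_map take_map dc_swap)



theorem proposition2p7:
  fixes lam :: "nat list" and t :: "nat \<Rightarrow> nat \<Rightarrow> nat"
  assumes "is_partition lam"
  shows "toggle (conj_part lam) (\<lambda>i j. t j i) = (\<lambda>i j. toggle lam t j i)"
proof -
  let ?R = "reading_boxes lam"
  let ?R' = "reading_boxes (conj_part lam)"
  let ?C = "map prod.swap ?R'"
  let ?s0 = "({} :: (nat \<times> nat) set, \<lambda>(_::nat) (_::nat). 0 :: int)"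
  have pc: "is_partition (conj_part lam)" by (rule conj_partition[OF assms])
  have vR: "valid ?R" by (rule valid_reading[OF assms])
  have vC: "valid ?C" by (rule valid_swap[OF valid_reading[OF pc]])
  have setC: "set ?C = set ?R"
  proof -
    have "set ?C = prod.swap ` boxes (conj_part lam)" by (simp add: set_reading)
    also have "\<dots> = boxes lam"
    proof
      show "prod.swap ` boxes (conj_part lam) \<subseteq> boxes lam" using boxes_conj[OF assms] by auto
      show "boxes lam \<subseteq> prod.swap ` boxes (conj_part lam)"
      proof
        fix x assume "x \<in> boxes lam"
        then have "prod.swap x \<in> boxes (conj_part lam)" using boxes_conj[OF assms, of "snd x" "fst x"] by (cases x) auto
        then show "x \<in> prod.swap ` boxes (conj_part lam)" by (metis image_eqI swap_swap)
      qed
    qed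
    finally show ?thesis by (simp add: set_reading)
  qed
  have eqf: "foldl (toggle_step t) ?s0 ?C = foldl (toggle_step t) ?s0 ?R"
    by (rule valid_fold[OF vC vR setC])
  have R'C: "?R' = map prod.swap ?C" by (simp add: comp_def)
  have coords: "\<forall>x\<in>set ?C. 1 \<le> fst x \<and> 1 \<le> snd x"
    using setC by (auto simp: set_reading boxes_def)
  have fs: "foldl (toggle_step (\<lambda>i j. t j i)) (prod.swap ` {}, \<lambda>a b. (\<lambda>(_::nat) (_::nat). 0 :: int) b a) (map prod.swap ?C)
     = (prod.swap ` fst (foldl (toggle_step t) ?s0 ?C), \<lambda>a b. snd (foldl (toggle_step t) ?s0 ?C) b a)"
    by (rule fold_swap[OF coords])
  have fs2: "snd (foldl (toggle_step (\<lambda>i j. t j i)) ?s0 ?R') i j = snd (foldl (toggle_step t) ?s0 ?R) j i" for i j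
    using fs eqf R'C by simp
  show ?thesis
  proof (intro ext)
    fix i j
    show "toggle (conj_part lam) (\<lambda>i j. t j i) i j = toggle lam t j i"
      unfolding toggle_def using fs2[of i j] boxes_conj[OF assms, of i j] by simp
  qed
qed


end
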